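(* Let $n\in\mathbb{N}$, $n\geq 2$, let $l\in(0,\frac{2}{n})$ and let $\alpha$ satisfy $\frac{2}{n}\leq\alpha<1+\frac{1}{n}-\frac{l}{2}$. Let $\theta$ with $1<\theta<\frac{n}{n-2}$ and $\mu>\frac{n}{2}$ be such that $$\frac{l(2\mu-1)}{4\mu-n}<\frac{n(\theta+1-2\alpha\theta)+2\theta}{2n\theta+n^2-n^2\theta},$$ and let $\theta'=\frac{\theta}{\theta-1}$, $\mu'=\frac{\mu}{\mu-1}$ be the conjugate exponents. Then there exist $p\in[1,\infty)$ and $q\in[1,\infty)$ such that the numbers $$a_1=\frac{\frac{np}{2}\big(1-\frac{1}{(p+2\alpha-2)\theta}\big)}{1-\frac n2+\frac{np}{2}},\quad a_2=\frac{nq\big(\frac1n-\frac{1}{2\theta'}\big)}{1-\frac n2+q},\quad a_3=\frac{\frac{np}{2l}\big(1-\frac{1}{2\mu}\big)}{1-\frac n2+\frac{np}{2l}},$$ $$a_4=\frac{nq\big(\frac1n-\frac{1}{2(q-1)\mu'}\big)}{1-\frac n2+q},\quad \kappa_1=\frac{\frac{np}{2}\big(1-\frac1p\big)}{1-\frac n2+\frac{np}{2}},\quad \kappa_2=\frac{q-\frac n2}{1-\frac n2+q}$$ all belong to $(0,1)$, and moreover $$\frac{p-2+2\alpha}{p}a_1+\frac1q a_2\in(0,1)\quad\text{and}\quad \frac{2l}{p}a_3+\frac{q-1}{q}a_4\in(0,1).$$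
   Context: For $n=2$ the condition $1<\theta<\frac{n}{n-2}$ is understood as $\theta>1$. *)

theory Defs
  imports "HOL-Analysis.Analysis"
begin

end

theory Submission
  imports Defs
begin

lemma frac01: "0 < (a::real) \<Longrightarrow> a < b \<Longrightarrow> a / b \<in> {0<..<1}"
  by auto

lemma cross_less: "0 < (b::real) \<Longrightarrow> 0 < d \<Longrightarrow> a * d < c * b \<Longrightarrow> a / b < c / d"
  by (simp add: divide_less_eq less_divide_eq mult.commute divide_simps)

theorem lemma4p6:
  fixes n :: nat and l \<alpha> \<theta> \<mu> :: real
  assumes hn: "n \<ge> 2"
    and hl: "0 < l" "l < 2 / real n"
    and h\<alpha>: "2 / real n \<le> \<alpha>" "\<alpha> < 1 + 1 / real n - l / 2"
    and h\<theta>: "1 < \<theta>" "n = 2 \<or> \<theta> < real n / (real n - 2)"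
    and h\<mu>: "\<mu> > real n / 2"
    and hcond: "l * (2 * \<mu> - 1) / (4 * \<mu> - real n)
       < (real n * (\<theta> + 1 - 2 * \<alpha> * \<theta>) + 2 * \<theta>)
         / (2 * real n * \<theta> + (real n)^2 - (real n)^2 * \<theta>)"
  shows "\<exists>p q :: real. 1 \<le> p \<and> 1 \<le> q \<and>
    (let \<theta>' = \<theta> / (\<theta> - 1); \<mu>' = \<mu> / (\<mu> - 1);
         a1 = (real n * p / 2 * (1 - 1 / ((p + 2 * \<alpha> - 2) * \<theta>))) / (1 - real n / 2 + real n * p / 2);
         a2 = (real n * q * (1 / real n - 1 / (2 * \<theta>'))) / (1 - real n / 2 + q);
         a3 = (real n * p / (2 * l) * (1 - 1 / (2 * \<mu>))) / (1 - real n / 2 + real n * p / (2 * l));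
         a4 = (real n * q * (1 / real n - 1 / (2 * (q - 1) * \<mu>'))) / (1 - real n / 2 + q);
         \<kappa>1 = (real n * p / 2 * (1 - 1 / p)) / (1 - real n / 2 + real n * p / 2);
         \<kappa>2 = (q - real n / 2) / (1 - real n / 2 + q)
     in a1 \<in> {0<..<1} \<and> a2 \<in> {0<..<1} \<and> a3 \<in> {0<..<1} \<and> a4 \<in> {0<..<1} \<and>
        \<kappa>1 \<in> {0<..<1} \<and> \<kappa>2 \<in> {0<..<1} \<and>
        (p - 2 + 2 * \<alpha>) / p * a1 + 1 / q * a2 \<in> {0<..<1} \<and>
        2 * l / p * a3 + (q - 1) / q * a4 \<in> {0<..<1})"
proof -
  let ?N = "real n"
  have N2: "?N \<ge> 2" using hn by simp
  have l1: "l < 1"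
  proof -
    have "2 / ?N \<le> 1" using N2 by simp
    then show ?thesis using hl by linarith
  qed
  have apos: "\<alpha> > 0" using h\<alpha>(1) N2 by (smt (verit) divide_pos_pos)
  have mu1: "\<mu> > 1" using h\<mu> N2 by linarith
  define B where "B = ?N - (?N - 2) * \<theta>"
  define A where "A = 2 + ?N + ?N / \<theta> - 2 * ?N * \<alpha>"
  have Bpos: "B > 0"
  proof (cases "n = 2")
    case True then show ?thesis by (simp add: B_def)
  next
    case False
    then have "\<theta> < ?N / (?N - 2)" using h\<theta> by auto
    moreover have "?N - 2 > 0" using False hn by simp
    ultimately have "\<theta> * (?N - 2) < ?N" by (simp add: pos_less_divide_eq)
    then show ?thesis by (simp add: B_def algebra_simps)
  qed
  have rhs_eq: "(real n * (\<theta> + 1 - 2 * \<alpha> * \<theta>) + 2 * \<theta>)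
         / (2 * real n * \<theta> + (real n)^2 - (real n)^2 * \<theta>) = \<theta> * A / (?N * B)"
  proof -
    have e1: "real n * (\<theta> + 1 - 2 * \<alpha> * \<theta>) + 2 * \<theta> = \<theta> * A"
      using h\<theta>(1) by (simp add: A_def field_simps)
    have e2: "2 * real n * \<theta> + (real n)^2 - (real n)^2 * \<theta> = ?N * B"
      by (simp add: B_def field_simps power2_eq_square)
    show ?thesis by (simp only: e1 e2)
  qed
  have lhs_pos: "l * (2 * \<mu> - 1) / (4 * \<mu> - real n) > 0"
    using hl mu1 h\<mu> by (intro divide_pos_pos mult_pos_pos) auto
  have key0: "l * (2 * \<mu> - 1) / (4 * \<mu> - real n) < \<theta> * A / (?N * B)"
    using hcond rhs_eq by simp
  have "\<theta> * A / (?N * B) > 0" using key0 lhs_pos by linarith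
  moreover have "?N * B > 0" using Bpos N2 by simp
  ultimately have "\<theta> * A > 0" by (simp add: zero_less_divide_iff)
  then have Apos: "A > 0" using h\<theta>(1) by (simp add: zero_less_mult_iff)
  have key: "?N * l * (2 * \<mu> - 1) * B < (4 * \<mu> - ?N) * (\<theta> * A)"
  proof -
    have "l * (2 * \<mu> - 1) * (?N * B) < \<theta> * A * (4 * \<mu> - ?N)"
      using key0 h\<mu> Bpos N2 by (simp add: divide_less_eq less_divide_eq mult.commute mult.left_commute)
    then show ?thesis by (simp add: algebra_simps)
  qed
  define r where "r = ?N * l * (2 * \<mu> - 1)"
  define c where "c = 4 * \<mu> - ?N"
  define s where "s = \<theta> * A"
  have rpos: "r > 0" unfolding r_def using N2 hl mu1 by simp
  have cpos: "c > 0" unfolding c_def using h\<mu> by simp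
  have spos: "s > 0" unfolding s_def using Apos h\<theta> by simp
  have rs: "r * B < c * s" using key by (simp add: r_def c_def s_def)
  have mid: "\<And>u v::real. u < v \<Longrightarrow> u < (u+v)/2 \<and> (u+v)/2 < v" by auto
  define k where "k = (B / s + c / r) / 2"
  have k1: "B < s * k"
  proof -
    have "B / s < c / r" using rs rpos spos by (simp add: divide_less_eq less_divide_eq field_simps)
    then have "B / s < k" unfolding k_def using mid by blast
    then show ?thesis using spos by (simp add: divide_less_eq mult.commute)
  qed
  have k2: "r * k < c"
  proof -
    have "B / s < c / r" using rs rpos spos by (simp add: divide_less_eq less_divide_eq field_simps)
    then have "k < c / r" unfolding k_def using mid by blast
    then show ?thesis using rpos by (simp add: less_divide_eq mult.commute)
  qed
  have kpos: "k > 0" using k1 Bpos spos by (smt (verit) mult_nonneg_nonpos)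
  define P1 where "P1 = 2 - 2 * \<alpha> + 1 / \<theta>"
  define P2 where "P2 = (?N - 2) * \<theta> * (2 * \<alpha> - 2) / B"
  define P3 where "P3 = 2 * l * \<mu> * (?N - 2) / ?N"
  define Q1 where "Q1 = (?N - 2) * \<theta> / (?N * (\<theta> - 1))"
  define Q2 where "Q2 = 1 + ?N * (\<mu> - 1) / (2 * \<mu>)"
  define X where "X = 1 + \<bar>?N * 1 + 2 - ?N\<bar> + \<bar>?N * P1 + 2 - ?N\<bar> + \<bar>?N * P2 + 2 - ?N\<bar>
     + \<bar>?N * P3 + 2 - ?N\<bar> + (\<bar>2 * (?N / 2) + 2 - ?N\<bar> + \<bar>2 * Q1 + 2 - ?N\<bar> + \<bar>2 * Q2 + 2 - ?N\<bar>) / k"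
  define p where "p = (X - 2 + ?N) / ?N"
  define Y where "Y = k * X"
  define q where "q = (Y - 2 + ?N) / 2"
  have Xp: "X = ?N * p + 2 - ?N" using N2 by (simp add: p_def field_simps)
  have Yq: "Y = 2 * q + 2 - ?N" by (simp add: q_def field_simps)
  have Xge: "X \<ge> 1 + \<bar>?N * 1 + 2 - ?N\<bar> + \<bar>?N * P1 + 2 - ?N\<bar> + \<bar>?N * P2 + 2 - ?N\<bar>
     + \<bar>?N * P3 + 2 - ?N\<bar>" using kpos unfolding X_def by (simp add: divide_nonneg_pos)
  have Yge: "Y \<ge> k + \<bar>2 * (?N / 2) + 2 - ?N\<bar> + \<bar>2 * Q1 + 2 - ?N\<bar> + \<bar>2 * Q2 + 2 - ?N\<bar>"
  proof -
    have "Y = k * (1 + \<bar>?N * 1 + 2 - ?N\<bar> + \<bar>?N * P1 + 2 - ?N\<bar> + \<bar>?N * P2 + 2 - ?N\<bar>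
     + \<bar>?N * P3 + 2 - ?N\<bar>) + (\<bar>2 * (?N / 2) + 2 - ?N\<bar> + \<bar>2 * Q1 + 2 - ?N\<bar> + \<bar>2 * Q2 + 2 - ?N\<bar>)"
      using kpos unfolding Y_def X_def by (simp add: field_simps)
    moreover have "k * (1 + \<bar>?N * 1 + 2 - ?N\<bar> + \<bar>?N * P1 + 2 - ?N\<bar> + \<bar>?N * P2 + 2 - ?N\<bar>
     + \<bar>?N * P3 + 2 - ?N\<bar>) \<ge> k * 1" using kpos by (intro mult_left_mono) auto
    ultimately show ?thesis by linarith
  qed
  have Xpos: "X > 0" using Xge by linarith
  have Ypos: "Y > 0" using Yge kpos by linarith
  have pgt: "?N * p > ?N * P" if "X > ?N * P + 2 - ?N" for P using that Xp by linarith
  have p1: "p > 1" using pgt[of 1] Xge N2 by fastforce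
  have pP1: "p > P1" using pgt[of P1] Xge N2 by fastforce
  have pP2: "p > P2" using pgt[of P2] Xge N2 by fastforce
  have pP3: "p > P3" using pgt[of P3] Xge N2 by fastforce
  have qN: "q > ?N / 2" using Yge Yq kpos by linarith
  have qQ1: "q > Q1" using Yge Yq kpos by linarith
  have qQ2: "q > Q2" using Yge Yq kpos by linarith
  have lnk1: "B * X < \<theta> * A * Y"
  proof -
    have "B * X < s * k * X" using k1 Xpos by simp
    then show ?thesis by (simp add: Y_def s_def mult.assoc mult.left_commute)
  qed
  have lnk2: "r * Y < c * X"
  proof -
    have "r * k * X < c * X" using k2 Xpos by simp
    then show ?thesis by (simp add: Y_def mult.assoc)
  qed
  define u where "u = p + 2 * \<alpha> - 2"
  define Z where "Z = 2 * l - ?N * l + ?N * p"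
  have ppos: "p > 0" using p1 by simp
  have q1: "q > 1" using qN N2 by linarith
  have qpos: "q > 0" using q1 by simp
  have uth: "u * \<theta> > 1"
  proof -
    have "u > 1 / \<theta>" using pP1 unfolding P1_def u_def by linarith
    then show ?thesis using h\<theta>(1) by (simp add: divide_less_eq mult.commute)
  qed
  have upos: "u > 0" using uth h\<theta>(1) by (smt (verit) mult_nonpos_nonneg)
  have ZX: "Z = X + (?N - 2) * (1 - l)" unfolding Z_def Xp by (simp add: algebra_simps)
  have ZgeX: "Z \<ge> X" using ZX N2 l1 by simp
  have Zpos: "Z > 0" using ZgeX Xpos by linarith
  have fP2: "(?N - 2) * \<theta> * u < ?N * p"
  proof -
    have "(?N - 2) * \<theta> * (2 * \<alpha> - 2) < p * B" using pP2 Bpos unfolding P2_def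
      by (simp add: pos_divide_less_eq mult.commute)
    then show ?thesis unfolding u_def B_def by (simp add: algebra_simps)
  qed
  have fQ1: "(?N - 2) * \<theta> < q * (?N * (\<theta> - 1))"
    using qQ1 h\<theta>(1) N2 unfolding Q1_def by (simp add: pos_divide_less_eq)
  have fP3: "2 * l * \<mu> * (?N - 2) < p * ?N"
    using pP3 N2 unfolding P3_def by (simp add: pos_divide_less_eq)
  have fQ2: "?N * (\<mu> - 1) < (q - 1) * (2 * \<mu>)"
  proof -
    have "?N * (\<mu> - 1) / (2 * \<mu>) < q - 1" using qQ2 unfolding Q2_def by linarith
    then show ?thesis using mu1 by (simp add: pos_divide_less_eq)
  qed
  have Dp: "1 - ?N / 2 + ?N * p / 2 = X / 2" by (simp add: Xp field_simps)
  have Dq: "1 - ?N / 2 + q = Y / 2" by (simp add: Yq field_simps)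
  have D3: "1 - ?N / 2 + ?N * p / (2 * l) = Z / (2 * l)" using hl by (simp add: Z_def field_simps)
  have a1e: "(?N * p / 2 * (1 - 1 / ((p + 2 * \<alpha> - 2) * \<theta>))) / (1 - ?N / 2 + ?N * p / 2)
      = ?N * p * (u * \<theta> - 1) / (\<theta> * u * X)"
    using upos h\<theta>(1) Xpos unfolding u_def[symmetric] Dp by (simp add: field_simps)
  have a2e: "(?N * q * (1 / ?N - 1 / (2 * (\<theta> / (\<theta> - 1))))) / (1 - ?N / 2 + q)
      = q * B / (\<theta> * Y)"
    using h\<theta>(1) Ypos N2 unfolding Dq B_def by (simp add: field_simps)
  have a3e: "(?N * p / (2 * l) * (1 - 1 / (2 * \<mu>))) / (1 - ?N / 2 + ?N * p / (2 * l))
      = ?N * p * (2 * \<mu> - 1) / (2 * \<mu> * Z)"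
    using hl mu1 Zpos unfolding D3 by (simp add: field_simps)
  have a4e: "(?N * q * (1 / ?N - 1 / (2 * (q - 1) * (\<mu> / (\<mu> - 1))))) / (1 - ?N / 2 + q)
      = q * (2 * (q - 1) * \<mu> - ?N * (\<mu> - 1)) / ((q - 1) * \<mu> * Y)"
    using q1 mu1 Ypos N2 unfolding Dq by (simp add: field_simps)
  have k1e: "(?N * p / 2 * (1 - 1 / p)) / (1 - ?N / 2 + ?N * p / 2) = ?N * (p - 1) / X"
    using ppos Xpos unfolding Dp by (simp add: field_simps)
  have A1: "?N * p * (u * \<theta> - 1) / (\<theta> * u * X) \<in> {0<..<1}"
  proof (rule frac01)
    show "0 < ?N * p * (u * \<theta> - 1)" using N2 ppos uth by simp
    have "\<theta> * u * X - ?N * p * (u * \<theta> - 1) = ?N * p - (?N - 2) * \<theta> * u"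
      unfolding Xp by (simp add: algebra_simps)
    then show "?N * p * (u * \<theta> - 1) < \<theta> * u * X" using fP2 by linarith
  qed
  have A2: "q * B / (\<theta> * Y) \<in> {0<..<1}"
  proof (rule frac01)
    show "0 < q * B" using qpos Bpos by simp
    have "\<theta> * Y - q * B = q * (?N * (\<theta> - 1)) - (?N - 2) * \<theta>"
      unfolding Yq B_def by (simp add: algebra_simps)
    then show "q * B < \<theta> * Y" using fQ1 by linarith
  qed
  have A3: "?N * p * (2 * \<mu> - 1) / (2 * \<mu> * Z) \<in> {0<..<1}"
  proof (rule frac01)
    show "0 < ?N * p * (2 * \<mu> - 1)" using N2 ppos mu1 by simp
    have "2 * \<mu> * Z - ?N * p * (2 * \<mu> - 1) = p * ?N - 2 * l * \<mu> * (?N - 2)"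
      unfolding Z_def by (simp add: algebra_simps)
    then show "?N * p * (2 * \<mu> - 1) < 2 * \<mu> * Z" using fP3 by linarith
  qed
  have A4: "q * (2 * (q - 1) * \<mu> - ?N * (\<mu> - 1)) / ((q - 1) * \<mu> * Y) \<in> {0<..<1}"
  proof (rule frac01)
    show "0 < q * (2 * (q - 1) * \<mu> - ?N * (\<mu> - 1))" using qpos fQ2 by (intro mult_pos_pos) (auto simp: algebra_simps)
    have "(q - 1) * \<mu> * Y - q * (2 * (q - 1) * \<mu> - ?N * (\<mu> - 1)) = \<mu> * (?N - 2) + q * (2 * \<mu> - ?N)"
      unfolding Yq by (simp add: algebra_simps)
    moreover have "\<mu> * (?N - 2) \<ge> 0" using mu1 N2 by simp
    moreover have "q * (2 * \<mu> - ?N) > 0" using qpos h\<mu> by simp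
    ultimately show "q * (2 * (q - 1) * \<mu> - ?N * (\<mu> - 1)) < (q - 1) * \<mu> * Y" by linarith
  qed
  have K1: "?N * (p - 1) / X \<in> {0<..<1}"
  proof (rule frac01)
    show "0 < ?N * (p - 1)" using N2 p1 by simp
    show "?N * (p - 1) < X" unfolding Xp by (simp add: algebra_simps)
  qed
  have K2: "(q - ?N / 2) / (1 - ?N / 2 + q) \<in> {0<..<1}"
    by (rule frac01) (use qN in auto)
  have t1e: "(p - 2 + 2 * \<alpha>) / p * (?N * p * (u * \<theta> - 1) / (\<theta> * u * X)) = ?N * (u * \<theta> - 1) / (\<theta> * X)"
  proof -
    have "p - 2 + 2 * \<alpha> = u" by (simp add: u_def)
    then show ?thesis using ppos upos h\<theta>(1) Xpos by (simp add: field_simps)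
  qed
  have t2e: "1 / q * (q * B / (\<theta> * Y)) = B / (\<theta> * Y)"
    using qpos by simp
  have t1f: "?N * (u * \<theta> - 1) / (\<theta> * X) = 1 - A / X"
  proof -
    have h: "?N * (u * \<theta> - 1) = \<theta> * (X - A)"
      using h\<theta>(1) unfolding A_def Xp u_def by (simp add: field_simps)
    show ?thesis using h\<theta>(1) Xpos unfolding h by (simp add: field_simps)
  qed
  have E1: "(p - 2 + 2 * \<alpha>) / p * (?N * p * (u * \<theta> - 1) / (\<theta> * u * X)) + 1 / q * (q * B / (\<theta> * Y)) \<in> {0<..<1}"
  proof -
    have "0 < ?N * (u * \<theta> - 1) / (\<theta> * X)" using N2 uth h\<theta>(1) Xpos by simp
    moreover have "0 < B / (\<theta> * Y)" using Bpos h\<theta>(1) Ypos by simp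
    moreover have "B / (\<theta> * Y) < A / X"
      by (rule cross_less) (use h\<theta>(1) Ypos Xpos lnk1 in \<open>auto simp: algebra_simps\<close>)
    ultimately show ?thesis unfolding t1e t2e t1f by auto
  qed
  have t3e: "2 * l / p * (?N * p * (2 * \<mu> - 1) / (2 * \<mu> * Z)) = r / (\<mu> * Z)"
    using ppos mu1 Zpos hl unfolding r_def by (simp add: field_simps)
  have t4e: "(q - 1) / q * (q * (2 * (q - 1) * \<mu> - ?N * (\<mu> - 1)) / ((q - 1) * \<mu> * Y)) = 1 - c / (\<mu> * Y)"
  proof -
    have s1: "(q - 1) / q * (q * (2 * (q - 1) * \<mu> - ?N * (\<mu> - 1)) / ((q - 1) * \<mu> * Y))
       = (2 * (q - 1) * \<mu> - ?N * (\<mu> - 1)) / (\<mu> * Y)"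
      using qpos q1 mu1 Ypos by (simp add: field_simps)
    have s2: "2 * (q - 1) * \<mu> - ?N * (\<mu> - 1) = \<mu> * Y - c"
      unfolding c_def Yq by (simp add: algebra_simps)
    show ?thesis unfolding s1 unfolding s2 using mu1 Ypos by (simp add: field_simps)
  qed
  have E2: "2 * l / p * (?N * p * (2 * \<mu> - 1) / (2 * \<mu> * Z)) + (q - 1) / q * (q * (2 * (q - 1) * \<mu> - ?N * (\<mu> - 1)) / ((q - 1) * \<mu> * Y)) \<in> {0<..<1}"
  proof -
    have "0 < r / (\<mu> * Z)" using rpos mu1 Zpos by simp
    moreover have "(q - 1) / q * (q * (2 * (q - 1) * \<mu> - ?N * (\<mu> - 1)) / ((q - 1) * \<mu> * Y)) > 0"
    proof (rule mult_pos_pos)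
      show "(q - 1) / q > 0" using q1 by simp
      show "0 < q * (2 * (q - 1) * \<mu> - ?N * (\<mu> - 1)) / ((q - 1) * \<mu> * Y)"
        using A4 by (simp only: greaterThanLessThan_iff)
    qed
    moreover have "r / (\<mu> * Z) < c / (\<mu> * Y)"
    proof (rule cross_less)
      have "r * Y < c * Z" using lnk2 ZgeX cpos by (smt (verit) mult_left_mono)
      then show "r * (\<mu> * Y) < c * (\<mu> * Z)" using mu1 by (simp add: algebra_simps)
    qed (use mu1 Zpos Ypos in auto)
    ultimately show ?thesis unfolding t3e t4e by auto
  qed
  show ?thesis
  proof (intro exI conjI)
    show "1 \<le> p" using p1 by simp
    show "1 \<le> q" using q1 by simp
    show "let \<theta>' = \<theta> / (\<theta> - 1); \<mu>' = \<mu> / (\<mu> - 1);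
         a1 = (real n * p / 2 * (1 - 1 / ((p + 2 * \<alpha> - 2) * \<theta>))) / (1 - real n / 2 + real n * p / 2);
         a2 = (real n * q * (1 / real n - 1 / (2 * \<theta>'))) / (1 - real n / 2 + q);
         a3 = (real n * p / (2 * l) * (1 - 1 / (2 * \<mu>))) / (1 - real n / 2 + real n * p / (2 * l));
         a4 = (real n * q * (1 / real n - 1 / (2 * (q - 1) * \<mu>'))) / (1 - real n / 2 + q);
         \<kappa>1 = (real n * p / 2 * (1 - 1 / p)) / (1 - real n / 2 + real n * p / 2);
         \<kappa>2 = (q - real n / 2) / (1 - real n / 2 + q)
     in a1 \<in> {0<..<1} \<and> a2 \<in> {0<..<1} \<and> a3 \<in> {0<..<1} \<and> a4 \<in> {0<..<1} \<and>
        \<kappa>1 \<in> {0<..<1} \<and> \<kappa>2 \<in> {0<..<1} \<and>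
        (p - 2 + 2 * \<alpha>) / p * a1 + 1 / q * a2 \<in> {0<..<1} \<and>
        2 * l / p * a3 + (q - 1) / q * a4 \<in> {0<..<1}"
      unfolding Let_def a1e a2e a3e a4e k1e using A1 A2 A3 A4 K1 K2 E1 E2 by blast
  qed
qed

end
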